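(* Consider $n=\sum_{i=1}^L n_i$ component lifetimes $T_j^{(i)}$, $j=1,\dots,n_i$, $i=1,\dots,L$ ($L\ge1$), where components of type $i$ have common reliability function $\bar F_i$, the lifetimes within each type are exchangeable, and the joint reliability function is given by a survival copula $\hat C$: $$P(T_j^{(i)}>t_j^{(i)},\ j=1,\dots,n_i,\ i=1,\dots,L)=\hat C\big(\bar F_1(t_1^{(1)}),\dots,\bar F_1(t_{n_1}^{(1)}),\dots,\bar F_L(t_1^{(L)}),\dots,\bar F_L(t_{n_L}^{(L)})\big).$$ Fix $i\in\{1,\dots,L\}$, integers $0\le m_k\le n_k$ for $k\ne i$ and $0\le m_i\le n_i-1$, $t\ge 0$ and $\delta>0$, and define $$A_{\mathbf{m}}^{(i)}(t,\delta)=P\Big(T_1^{(k)}>t,\dots,T_{m_k}^{(k)}>t,\ T_{m_k+1}^{(k)}\le t,\dots,T_{n_k}^{(k)}\le t \text{ for all } k\neq i;\ t<T_1^{(i)}\le t+\delta,\ T_2^{(i)}>t,\dots,T_{m_i+1}^{(i)}>t,\ T_{m_i+2}^{(i)}\le t,\dots,T_{n_i}^{(i)}\le t\Big).$$ Then $$A_{\mathbf{m}}^{(i)}(t, \delta)=\sum_{j_1=0}^{n_1-m_1}\cdots\sum_{j_i=0}^{n_i-m_i-1}\cdots\sum_{j_L=0}^{n_L-m_L}(-1)^{j_1+\cdots + j_L}\binom{n_1-m_1}{j_1}\cdots \binom{n_i-m_i-1}{j_i}\cdots\binom{n_L-m_L}{j_L}\Big[\hat{C}(\underbrace{\bar{F}_1(t)}_{m_1+j_1},\underbrace{1}_{n_1-(m_1+j_1)},\dots,\underbrace{\bar{F}_i(t)}_{m_i+j_i+1},\underbrace{1}_{n_i-(m_i+j_i+1)},\dots,\underbrace{\bar{F}_L(t)}_{m_L+j_L},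 \underbrace{1}_{n_L-(m_L+j_L)})-\hat{C}(\underbrace{\bar{F}_1(t)}_{m_1+j_1},\underbrace{1}_{n_1-(m_1+j_1)},\dots,\underbrace{\bar{F}_i(t)}_{m_i+j_i},\bar{F}_i(t+\delta),\underbrace{1}_{n_i-(m_i+j_i+1)}, \dots,\underbrace{\bar{F}_L(t)}_{m_L+j_L},\underbrace{1}_{n_L-(m_L+j_L)})\Big].$$
   Context: In the arguments of $\hat C$, the notation $\underbrace{u}_{m}$ denotes $m$ consecutive repetitions of the value $u$; the arguments are listed block by block, the $k$th block consisting of the $n_k$ arguments associated with the components of type $k$ (by within-type exchangeability, the order of arguments inside a block is immaterial). *)

theory Defs
  imports "HOL-Probability.Probability" "HOL-Combinatorics.Permutations"
begin

definition comp_index :: "nat \<Rightarrow> (nat \<Rightarrow> nat) \<Rightarrow> (nat \<times> nat) set" where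
  "comp_index L n = (SIGMA k:{1..L}. {1..n k})"

definition copula :: "'i set \<Rightarrow> (('i \<Rightarrow> real) \<Rightarrow> real) \<Rightarrow> bool" where
  "copula I C \<longleftrightarrow>
     (\<exists>\<mu>. prob_space \<mu> \<and> sets \<mu> = sets (PiM I (\<lambda>_. borel)) \<and>
        (\<forall>k\<in>I. \<forall>x\<in>{0..1}. measure \<mu> {y\<in>space \<mu>. y k \<le> x} = x) \<and>
        (\<forall>u. (\<forall>k\<in>I. u k \<in> {0..1}) \<longrightarrow>
              C u = measure \<mu> {y\<in>space \<mu>. \<forall>k\<in>I. y k \<le> u k}))"

definition exchangeable_within_types ::
  "'a measure \<Rightarrow> nat \<Rightarrow> (nat \<Rightarrow> nat) \<Rightarrow> (nat \<Rightarrow> nat \<Rightarrow> 'a \<Rightarrow> real) \<Rightarrow> bool" where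
  "exchangeable_within_types M L n T \<longleftrightarrow>
     (\<forall>p. (\<forall>k\<in>{1..L}. p k permutes {1..n k}) \<longrightarrow>
        distr M (PiM (comp_index L n) (\<lambda>_. borel))
          (\<lambda>\<omega>. \<lambda>x\<in>comp_index L n. T (fst x) (p (fst x) (snd x)) \<omega>)
      = distr M (PiM (comp_index L n) (\<lambda>_. borel))
          (\<lambda>\<omega>. \<lambda>x\<in>comp_index L n. T (fst x) (snd x) \<omega>))"

end

theory Submission
  imports Defs
begin

lemma perm_exists:
  fixes S A B :: "nat set"
  assumes "finite S" "A \<subseteq> S" "B \<subseteq> S" "card A = card B" "a \<in> A" "b \<in> B"
  shows "\<exists>p. p permutes S \<and> p ` A = B \<and> p a = b"
proof -
  have fA: "finite A" "finite B" using assms finite_subset by auto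
  obtain f where f: "bij_betw f (A - {a}) (B - {b})"
    using finite_same_card_bij[of "A - {a}" "B - {b}"] fA assms by auto
  have "card (S - A) = card (S - B)" using assms fA by (simp add: card_Diff_subset)
  then obtain g where g: "bij_betw g (S - A) (S - B)"
    using finite_same_card_bij[of "S - A" "S - B"] assms by auto
  define p where "p x = (if x = a then b else if x \<in> A then f x else if x \<in> S then g x else x)" for x
  have b1: "bij_betw p (A - {a}) (B - {b})"
    using f by (rule bij_betw_cong[THEN iffD1, rotated]) (auto simp: p_def)
  have b2: "bij_betw p (S - A) (S - B)"
    using g by (rule bij_betw_cong[THEN iffD1, rotated]) (use assms in \<open>auto simp: p_def\<close>)
  have b3: "bij_betw p {a} {b}" using assms by (auto simp: p_def bij_betw_def)
  have b4: "bij_betw p (A - {a} \<union> {a}) (B - {b} \<union> {b})"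
    by (rule bij_betw_combine[OF b1 b3]) auto
  have b5: "bij_betw p ((A - {a} \<union> {a}) \<union> (S - A)) ((B - {b} \<union> {b}) \<union> (S - B))"
    by (rule bij_betw_combine[OF b4 b2]) (use assms in auto)
  have e1: "(A - {a} \<union> {a}) \<union> (S - A) = S" "(B - {b} \<union> {b}) \<union> (S - B) = S"
    using assms by auto
  have "p permutes S"
    by (rule bij_imp_permutes) (use b5 e1 in \<open>auto simp: p_def\<close>)
  moreover have "p ` A = B" using b4 assms by (simp add: bij_betw_def insert_absorb)
  moreover have "p a = b" by (simp add: p_def)
  ultimately show ?thesis by blast
qed

lemma perm_exists0:
  fixes S A B :: "nat set"
  assumes "finite S" "A \<subseteq> S" "B \<subseteq> S" "card A = card B"
  shows "\<exists>p. p permutes S \<and> p ` A = B"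
proof (cases "A = {}")
  case True
  then have "B = {}" using assms finite_subset by (metis card_0_eq card.empty)
  then show ?thesis using True by (intro exI[of _ id]) (auto simp: permutes_id)
next
  case False
  then obtain a where "a \<in> A" by auto
  moreover have "B \<noteq> {}" using False assms finite_subset by (metis card_0_eq card.empty)
  then obtain b where "b \<in> B" by auto
  ultimately show ?thesis using perm_exists[OF assms] by blast
qed

lemma (in prob_space) incl_excl:
  assumes "finite R" "\<And>r. r \<in> R \<Longrightarrow> f r \<in> events"
  shows "\<And>B. B \<in> events \<Longrightarrow> prob (B \<inter> (\<Inter>r\<in>R. space M - f r)) =
     (\<Sum>Q\<in>Pow R. (-1) ^ card Q * prob (B \<inter> (\<Inter>r\<in>Q. f r)))"
  using assms
proof (induction R rule: finite_induct)
  case empty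
  then show ?case by simp
next
  case (insert a R)
  have fa: "f a \<in> events" using insert by auto
  have Bfa: "B \<inter> f a \<in> events" using insert.prems fa by auto
  have "B \<inter> (\<Inter>r\<in>R. space M - f r) = B - (\<Union>r\<in>R. f r)"
    using sets.sets_into_space[OF insert.prems(1)] by auto
  then have ev: "B \<inter> (\<Inter>r\<in>R. space M - f r) \<in> events"
    using insert by (auto intro!: sets.Diff sets.finite_UN)
  have ev2: "B \<inter> f a \<inter> (\<Inter>r\<in>R. space M - f r) \<in> events" using sets.Int[OF fa ev] by (simp add: Int_ac)
  have eqs: "B \<inter> (\<Inter>r\<in>insert a R. space M - f r) =
        (B \<inter> (\<Inter>r\<in>R. space M - f r)) - (B \<inter> f a \<inter> (\<Inter>r\<in>R. space M - f r))"
    using sets.sets_into_space[OF insert.prems(1)] by auto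
  have "prob (B \<inter> (\<Inter>r\<in>insert a R. space M - f r)) =
      prob (B \<inter> (\<Inter>r\<in>R. space M - f r)) - prob (B \<inter> f a \<inter> (\<Inter>r\<in>R. space M - f r))"
    unfolding eqs by (rule finite_measure_Diff[OF ev ev2]) blast
  also have "\<dots> = (\<Sum>Q\<in>Pow R. (-1) ^ card Q * prob (B \<inter> (\<Inter>r\<in>Q. f r)))
      - (\<Sum>Q\<in>Pow R. (-1) ^ card Q * prob (B \<inter> f a \<inter> (\<Inter>r\<in>Q. f r)))"
    using insert.IH[OF insert.prems(1)] insert.IH[OF Bfa] insert.prems by auto
  finally have L: "prob (B \<inter> (\<Inter>r\<in>insert a R. space M - f r)) = (\<Sum>Q\<in>Pow R. (-1) ^ card Q * prob (B \<inter> (\<Inter>r\<in>Q. f r)))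
      - (\<Sum>Q\<in>Pow R. (-1) ^ card Q * prob (B \<inter> f a \<inter> (\<Inter>r\<in>Q. f r)))" .
  have "(\<Sum>Q\<in>Pow (insert a R). (-1) ^ card Q * prob (B \<inter> (\<Inter>r\<in>Q. f r))) =
      (\<Sum>Q\<in>Pow R. (-1) ^ card Q * prob (B \<inter> (\<Inter>r\<in>Q. f r))) +
      (\<Sum>Q\<in>insert a ` Pow R. (-1) ^ card Q * prob (B \<inter> (\<Inter>r\<in>Q. f r)))"
    unfolding Pow_insert using insert.hyps
    by (intro sum.union_disjoint) auto
  also have "(\<Sum>Q\<in>insert a ` Pow R. (-1) ^ card Q * prob (B \<inter> (\<Inter>r\<in>Q. f r))) =
      (\<Sum>Q\<in>Pow R. (-1) ^ card (insert a Q) * prob (B \<inter> (\<Inter>r\<in>insert a Q. f r)))"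
    using insert.hyps by (subst sum.reindex) (auto intro!: inj_onI simp: subset_insert)
  also have "\<dots> = - (\<Sum>Q\<in>Pow R. (-1) ^ card Q * prob (B \<inter> f a \<inter> (\<Inter>r\<in>Q. f r)))"
    unfolding sum_negf[symmetric]
  proof (rule sum.cong)
    fix Q assume "Q \<in> Pow R"
    then have "card (insert a Q) = Suc (card Q)" using insert.hyps finite_subset[of Q R] by (subst card_insert_disjoint) auto
    moreover have "B \<inter> (\<Inter>r\<in>insert a Q. f r) = B \<inter> f a \<inter> (\<Inter>r\<in>Q. f r)" by auto
    ultimately show "(-1) ^ card (insert a Q) * prob (B \<inter> (\<Inter>r\<in>insert a Q. f r)) =
       - ((-1) ^ card Q * prob (B \<inter> f a \<inter> (\<Inter>r\<in>Q. f r)))" by simp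
  qed simp
  finally have "(\<Sum>Q\<in>Pow (insert a R). (-1) ^ card Q * prob (B \<inter> (\<Inter>r\<in>Q. f r))) =
      (\<Sum>Q\<in>Pow R. (-1) ^ card Q * prob (B \<inter> (\<Inter>r\<in>Q. f r))) - (\<Sum>Q\<in>Pow R. (-1) ^ card Q * prob (B \<inter> f a \<inter> (\<Inter>r\<in>Q. f r)))" by simp
  then show ?case using L by simp
qed

lemma finite_comp_index: "finite (comp_index L n)"
  unfolding comp_index_def by auto

lemma copula_cong:
  assumes "copula I C" "\<And>r. r \<in> I \<Longrightarrow> u r = v r" "\<And>r. r \<in> I \<Longrightarrow> u r \<in> {0..1}"
  shows "C u = C v"
proof -
  obtain \<mu> where mu: "\<forall>u. (\<forall>k\<in>I. u k \<in> {0..1}) \<longrightarrow>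
              C u = measure \<mu> {y\<in>space \<mu>. \<forall>k\<in>I. y k \<le> u k}"
    using assms(1) unfolding copula_def by blast
  have "C u = measure \<mu> {y\<in>space \<mu>. \<forall>k\<in>I. y k \<le> u k}" using mu assms(3) by blast
  also have "\<dots> = measure \<mu> {y\<in>space \<mu>. \<forall>k\<in>I. y k \<le> v k}" using assms(2) by auto
  also have "\<dots> = C v" using mu assms(2,3) by force
  finally show ?thesis .
qed

lemma exch_event:
  fixes x :: "nat \<Rightarrow> nat \<Rightarrow> real"
  assumes exch: "exchangeable_within_types M L n T"
    and rv: "\<And>k j. (k, j) \<in> comp_index L n \<Longrightarrow> T k j \<in> borel_measurable M"
    and p: "\<And>k. k \<in> {1..L} \<Longrightarrow> p k permutes {1..n k}"
    and U: "U \<subseteq> comp_index L n"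
  shows "measure M {\<omega>\<in>space M. \<forall>(k,j)\<in>U. x k j < T k (p k j) \<omega>}
       = measure M {\<omega>\<in>space M. \<forall>(k,j)\<in>U. x k j < T k j \<omega>}"
proof -
  let ?I = "comp_index L n"
  let ?N = "PiM ?I (\<lambda>_. borel) :: ((nat \<times> nat) \<Rightarrow> real) measure"
  define A where "A = {f\<in>space ?N. \<forall>(k,j)\<in>U. x k j < f (k,j)}"
  have finU: "finite U" using U finite_comp_index finite_subset by blast
  have "A = space ?N - (\<Union>r\<in>U. space ?N - {f\<in>space ?N. x (fst r) (snd r) < f r})"
    unfolding A_def by fastforce
  also have "\<dots> \<in> sets ?N"
  proof (intro sets.Diff sets.finite_UN finU sets.top)
    fix r assume "r \<in> U"
    then have "r \<in> ?I" using U by auto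
    then show "{f\<in>space ?N. x (fst r) (snd r) < f r} \<in> sets ?N" by measurable
  qed
  finally have A: "A \<in> sets ?N" .
  have pin: "(k, p k j) \<in> ?I" if "(k,j) \<in> ?I" for k j
    using that p permutes_in_image[OF p] unfolding comp_index_def by auto
  have m1: "(\<lambda>\<omega>. \<lambda>r\<in>?I. T (fst r) (p (fst r) (snd r)) \<omega>) \<in> measurable M ?N"
    by (intro measurable_restrict) (use rv pin in auto)
  have m2: "(\<lambda>\<omega>. \<lambda>r\<in>?I. T (fst r) (snd r) \<omega>) \<in> measurable M ?N"
    by (intro measurable_restrict) (use rv in auto)
  have e1: "(\<lambda>\<omega>. \<lambda>r\<in>?I. T (fst r) (p (fst r) (snd r)) \<omega>) -` A \<inter> space M
        = {\<omega>\<in>space M. \<forall>(k,j)\<in>U. x k j < T k (p k j) \<omega>}"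
    using U unfolding A_def by (auto simp: space_PiM)
  have e2: "(\<lambda>\<omega>. \<lambda>r\<in>?I. T (fst r) (snd r) \<omega>) -` A \<inter> space M
        = {\<omega>\<in>space M. \<forall>(k,j)\<in>U. x k j < T k j \<omega>}"
    using U unfolding A_def by (auto simp: space_PiM)
  have d: "distr M ?N (\<lambda>\<omega>. \<lambda>r\<in>?I. T (fst r) (p (fst r) (snd r)) \<omega>)
         = distr M ?N (\<lambda>\<omega>. \<lambda>r\<in>?I. T (fst r) (snd r) \<omega>)"
    using exch p unfolding exchangeable_within_types_def by blast
  show ?thesis
    using measure_distr[OF m1 A] measure_distr[OF m2 A] d e1 e2 by simp
qed

lemma marg:
  fixes M :: "'a measure" and x :: "nat \<Rightarrow> nat \<Rightarrow> real"
    and T :: "nat \<Rightarrow> nat \<Rightarrow> 'a \<Rightarrow> real"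
    and Fbar :: "nat \<Rightarrow> real \<Rightarrow> real"
    and Chat :: "(nat \<times> nat \<Rightarrow> real) \<Rightarrow> real"
  assumes "prob_space M"
    and rv: "\<And>k j. (k, j) \<in> comp_index L n \<Longrightarrow> T k j \<in> borel_measurable M"
    and rel: "\<And>k j s. (k, j) \<in> comp_index L n \<Longrightarrow>
                Fbar k s = measure M {\<omega>\<in>space M. T k j \<omega> > s}"
    and cop: "copula (comp_index L n) Chat"
    and surv: "\<And>s :: nat \<Rightarrow> nat \<Rightarrow> real.
                measure M {\<omega>\<in>space M. \<forall>(k, j)\<in>comp_index L n. T k j \<omega> > s k j}
                  = Chat (\<lambda>(k, j). Fbar k (s k j))"
    and U: "U \<subseteq> comp_index L n"
  shows "measure M {\<omega>\<in>space M. \<forall>(k,j)\<in>U. x k j < T k j \<omega>}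
       = Chat (\<lambda>(k,j). if (k,j) \<in> U then Fbar k (x k j) else 1)"
proof -
  interpret prob_space M by fact
  define I where "I = comp_index L n"
  define V where "V = I - U"
  have finI: "finite I" unfolding I_def by (rule finite_comp_index)
  have finV: "finite V" unfolding V_def using finI by auto
  have UI: "U \<subseteq> I" using U I_def by simp
  have rvI: "(\<lambda>\<omega>. T (fst r) (snd r) \<omega>) \<in> borel_measurable M" if "r \<in> I" for r
    using rv[of "fst r" "snd r"] that I_def by auto
  have Fb: "Fbar (fst r) a = prob {\<omega>\<in>space M. a < T (fst r) (snd r) \<omega>}" if "r \<in> I" for r a
    using rel[of "fst r" "snd r" a] that I_def by auto
  have Fb01: "Fbar (fst r) a \<in> {0..1}" if "r \<in> I" for r a
    using Fb[OF that] by auto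
  have Fble: "prob {\<omega>\<in>space M. T (fst r) (snd r) \<omega> \<le> a} = 1 - Fbar (fst r) a" if "r \<in> I" for r a
  proof -
    have "{\<omega>\<in>space M. T (fst r) (snd r) \<omega> \<le> a} = space M - {\<omega>\<in>space M. a < T (fst r) (snd r) \<omega>}"
      by auto
    moreover have "{\<omega>\<in>space M. a < T (fst r) (snd r) \<omega>} \<in> events"
      using rvI[OF that] by measurable
    ultimately show ?thesis using prob_compl Fb[OF that] by simp
  qed
  obtain \<mu> where mu: "prob_space \<mu>" "sets \<mu> = sets (PiM I (\<lambda>_. borel))"
     "\<forall>k\<in>I. \<forall>x\<in>{0..1}. measure \<mu> {y\<in>space \<mu>. y k \<le> x} = x"
     "\<forall>u. (\<forall>k\<in>I. u k \<in> {0..1}) \<longrightarrow>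
              Chat u = measure \<mu> {y\<in>space \<mu>. \<forall>k\<in>I. y k \<le> u k}"
    using cop unfolding copula_def I_def by blast
  interpret mu: prob_space \<mu> by (rule mu(1))
  have spmu: "space \<mu> = space (PiM I (\<lambda>_. borel))" by (rule sets_eq_imp_space_eq[OF mu(2)])
  have setsle: "{y\<in>space \<mu>. y r \<le> a} \<in> sets \<mu>" if "r \<in> I" for r a
    unfolding mu(2) spmu using that by measurable
  have mu_gt: "measure \<mu> {y\<in>space \<mu>. a < y r} = 1 - a" if "r \<in> I" "a \<in> {0..1}" for r a
  proof -
    have "{y\<in>space \<mu>. a < y r} = space \<mu> - {y\<in>space \<mu>. y r \<le> a}" by auto
    then show ?thesis using mu.prob_compl[OF setsle[OF that(1)]] mu(3) that by simp
  qed
  define u where "u = (\<lambda>(k,j). if (k,j) \<in> U then Fbar k (x k j) else 1)"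
  define s where "s N k j = (if (k,j) \<in> U then x k j else - real N)" for N :: nat and k j
  define v where "v N = (\<lambda>(k,j). Fbar k (s N k j))" for N
  define S where "S N = (\<Sum>r\<in>V. 1 - Fbar (fst r) (- real N))" for N :: nat
  define E where "E = {\<omega>\<in>space M. \<forall>(k,j)\<in>U. x k j < T k j \<omega>}"
  define EN where "EN N = {\<omega>\<in>space M. \<forall>(k, j)\<in>I. T k j \<omega> > s N k j}" for N
  have u01: "u r \<in> {0..1}" if "r \<in> I" for r
  proof (cases r)
    case (Pair k j)
    then show ?thesis using Fb01[OF that] by (simp add: u_def)
  qed
  have v01: "v N r \<in> {0..1}" if "r \<in> I" for r N
  proof (cases r)
    case (Pair k j)
    then show ?thesis using Fb01[OF that] by (simp add: v_def)
  qed
  have evI: "{\<omega>\<in>space M. \<forall>(k, j)\<in>W. y k j < T k j \<omega>} \<in> events" if "W \<subseteq> I" for W y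
  proof -
    have fW: "finite W" using that finI finite_subset by blast
    have "{\<omega>\<in>space M. \<forall>(k, j)\<in>W. y k j < T k j \<omega>} =
      space M - (\<Union>r\<in>W. space M - {\<omega>\<in>space M. y (fst r) (snd r) < T (fst r) (snd r) \<omega>})"
      by fastforce
    also have "\<dots> \<in> events"
    proof (intro sets.Diff sets.finite_UN fW sets.top)
      fix r assume "r \<in> W"
      then have "r \<in> I" using that by auto
      from rvI[OF this] show "{\<omega>\<in>space M. y (fst r) (snd r) < T (fst r) (snd r) \<omega>} \<in> events"
        by measurable
    qed
    finally show ?thesis .
  qed
  have Eev: "E \<in> events" unfolding E_def by (rule evI[OF UI])
  have ENev: "EN N \<in> events" for N unfolding EN_def by (rule evI) simp
  have c1: "prob (EN N) = Chat (v N)" for N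
    unfolding EN_def v_def I_def by (rule surv)
  have c2: "0 \<le> prob E - prob (EN N) \<and> prob E - prob (EN N) \<le> S N" for N
  proof -
    have sub: "EN N \<subseteq> E" using UI unfolding EN_def E_def s_def by fastforce
    have "E - EN N \<subseteq> (\<Union>r\<in>V. {\<omega>\<in>space M. T (fst r) (snd r) \<omega> \<le> - real N})"
    proof
      fix \<omega> assume "\<omega> \<in> E - EN N"
      then obtain k j where kj: "(k,j) \<in> I" "\<not> s N k j < T k j \<omega>" "\<omega> \<in> space M"
        "\<forall>(k,j)\<in>U. x k j < T k j \<omega>"
        unfolding EN_def E_def by auto
      then have "(k,j) \<notin> U" unfolding s_def by auto
      then show "\<omega> \<in> (\<Union>r\<in>V. {\<omega>\<in>space M. T (fst r) (snd r) \<omega> \<le> - real N})"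
        using kj unfolding V_def s_def by (intro UN_I[of "(k,j)"]) auto
    qed
    moreover have evs: "(\<lambda>r. {\<omega>\<in>space M. T (fst r) (snd r) \<omega> \<le> - real N}) ` V \<subseteq> events"
    proof (rule image_subsetI)
      fix r assume "r \<in> V"
      then have "r \<in> I" unfolding V_def by auto
      from rvI[OF this] show "{\<omega>\<in>space M. T (fst r) (snd r) \<omega> \<le> - real N} \<in> events" by measurable
    qed
    ultimately have "prob (E - EN N) \<le> prob (\<Union>r\<in>V. {\<omega>\<in>space M. T (fst r) (snd r) \<omega> \<le> - real N})"
      by (intro finite_measure_mono) (use evs finV in auto)
    also have "\<dots> \<le> (\<Sum>r\<in>V. prob {\<omega>\<in>space M. T (fst r) (snd r) \<omega> \<le> - real N})"
      by (rule finite_measure_subadditive_finite[OF finV evs])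
    also have "\<dots> = S N" unfolding S_def using Fble V_def by (intro sum.cong) auto
    finally show ?thesis using finite_measure_Diff[OF Eev ENev sub] finite_measure_mono[OF sub Eev] by simp
  qed
  have c3: "0 \<le> Chat u - Chat (v N) \<and> Chat u - Chat (v N) \<le> S N" for N
  proof -
    define Du where "Du = {y\<in>space \<mu>. \<forall>k\<in>I. y k \<le> u k}"
    define Dv where "Dv = {y\<in>space \<mu>. \<forall>k\<in>I. y k \<le> v N k}"
    have evmu: "{y\<in>space \<mu>. \<forall>k\<in>I. y k \<le> w k} \<in> sets \<mu>" for w :: "nat \<times> nat \<Rightarrow> real"
    proof -
      have "{y\<in>space \<mu>. \<forall>k\<in>I. y k \<le> w k} = space \<mu> - (\<Union>r\<in>I. space \<mu> - {y\<in>space \<mu>. y r \<le> w r})"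
        by auto
      also have "\<dots> \<in> sets \<mu>" using setsle finI by (intro sets.Diff sets.finite_UN sets.top) auto
      finally show ?thesis .
    qed
    have Du: "Chat u = measure \<mu> Du" unfolding Du_def using mu(4) u01 by blast
    have Dv: "Chat (v N) = measure \<mu> Dv" unfolding Dv_def using mu(4) v01 by blast
    have vu: "v N r \<le> u r" if "r \<in> I" for r
      using v01[OF that] unfolding u_def v_def s_def by (auto split: prod.splits)
    have sub: "Dv \<subseteq> Du" unfolding Du_def Dv_def using vu by (auto intro: order_trans)
    have "Du - Dv \<subseteq> (\<Union>r\<in>V. {y\<in>space \<mu>. v N r < y r})"
    proof
      fix y assume "y \<in> Du - Dv"
      then obtain r where r: "r \<in> I" "\<not> y r \<le> v N r" "y \<in> space \<mu>" "\<forall>k\<in>I. y k \<le> u k"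
        unfolding Du_def Dv_def by auto
      then have "r \<notin> U" unfolding u_def v_def s_def by (auto split: prod.splits)
      then show "y \<in> (\<Union>r\<in>V. {y\<in>space \<mu>. v N r < y r})" using r V_def not_le by blast
    qed
    moreover have "(\<lambda>r. {y\<in>space \<mu>. v N r < y r}) ` V \<subseteq> sets \<mu>"
    proof -
      { fix r assume "r \<in> V"
        then have "r \<in> I" unfolding V_def by auto
        have "{y\<in>space \<mu>. v N r < y r} = space \<mu> - {y\<in>space \<mu>. y r \<le> v N r}" by auto
        then have "{y\<in>space \<mu>. v N r < y r} \<in> sets \<mu>" using setsle[OF \<open>r \<in> I\<close>] by auto }
      then show ?thesis by auto
    qed
    moreover note evs = calculation(2)
    ultimately have "measure \<mu> (Du - Dv) \<le> measure \<mu> (\<Union>r\<in>V. {y\<in>space \<mu>. v N r < y r})"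
      by (intro mu.finite_measure_mono) (use finV in auto)
    also have "\<dots> \<le> (\<Sum>r\<in>V. measure \<mu> {y\<in>space \<mu>. v N r < y r})"
      by (rule mu.finite_measure_subadditive_finite[OF finV evs])
    also have "\<dots> = S N" unfolding S_def
    proof (intro sum.cong refl)
      fix r assume "r \<in> V"
      then have rI: "r \<in> I" "r \<notin> U" unfolding V_def by auto
      then have "v N r = Fbar (fst r) (- real N)" unfolding v_def s_def by (auto split: prod.splits)
      then show "measure \<mu> {y\<in>space \<mu>. v N r < y r} = 1 - Fbar (fst r) (- real N)"
        using mu_gt[OF rI(1) v01[OF rI(1), of N]] by simp
    qed
    finally show ?thesis using mu.finite_measure_Diff[OF evmu evmu, of "v N" u] sub
      mu.finite_measure_mono[OF sub] Du Dv unfolding Du_def Dv_def by (simp add: evmu)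
  qed
  have c4: "S \<longlonglongrightarrow> 0"
  proof -
    have "(\<lambda>N. 1 - Fbar (fst r) (- real N)) \<longlonglongrightarrow> 1 - 1" if "r \<in> V" for r
    proof (intro tendsto_diff tendsto_const)
      have rI: "r \<in> I" using that V_def by auto
      define A where "A N = {\<omega>\<in>space M. - real N < T (fst r) (snd r) \<omega>}" for N :: nat
      have "range A \<subseteq> events" unfolding A_def using rvI[OF rI] by auto
      moreover have "incseq A" unfolding A_def incseq_def by auto
      moreover have "(\<Union>N. A N) = space M"
      proof (rule set_eqI, rule iffI)
        fix \<omega> assume "\<omega> \<in> space M"
        obtain N :: nat where "- T (fst r) (snd r) \<omega> < real N" using reals_Archimedean2 by blast
        then have "\<omega> \<in> A N" using \<open>\<omega> \<in> space M\<close> unfolding A_def by auto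
        then show "\<omega> \<in> (\<Union>N. A N)" by blast
      qed (auto simp: A_def)
      ultimately have "(\<lambda>N. prob (A N)) \<longlonglongrightarrow> prob (space M)"
        using Lim_measure_incseq[of A M] by (simp add: emeasure_space_1)
      moreover have "prob (A N) = Fbar (fst r) (- real N)" for N using Fb[OF rI] A_def by simp
      ultimately show "(\<lambda>N. Fbar (fst r) (- real N)) \<longlonglongrightarrow> 1" using prob_space by simp
    qed
    then have "S \<longlonglongrightarrow> (\<Sum>r\<in>V. 1 - 1)" unfolding S_def by (intro tendsto_sum) simp
    then show ?thesis by simp
  qed
  have "\<bar>prob E - Chat u\<bar> \<le> S N" for N
    using c1[of N] c2[of N] c3[of N] by linarith
  then have "\<bar>prob E - Chat u\<bar> \<le> 0"
    by (intro LIMSEQ_le_const[OF c4]) auto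
  then show ?thesis unfolding E_def u_def by simp
qed

lemma canon:
  fixes M :: "'a measure"
    and T :: "nat \<Rightarrow> nat \<Rightarrow> 'a \<Rightarrow> real"
    and Fbar :: "nat \<Rightarrow> real \<Rightarrow> real"
    and Chat :: "(nat \<times> nat \<Rightarrow> real) \<Rightarrow> real"
  assumes "prob_space M"
    and rv: "\<And>k j. (k, j) \<in> comp_index L n \<Longrightarrow> T k j \<in> borel_measurable M"
    and rel: "\<And>k j s. (k, j) \<in> comp_index L n \<Longrightarrow>
                Fbar k s = measure M {\<omega>\<in>space M. T k j \<omega> > s}"
    and exch: "exchangeable_within_types M L n T"
    and cop: "copula (comp_index L n) Chat"
    and surv: "\<And>s :: nat \<Rightarrow> nat \<Rightarrow> real.
                measure M {\<omega>\<in>space M. \<forall>(k, j)\<in>comp_index L n. T k j \<omega> > s k j}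
                  = Chat (\<lambda>(k, j). Fbar k (s k j))"
    and i: "i \<in> {1..L}"
    and W: "\<And>k. k \<in> {1..L} \<Longrightarrow> W k \<subseteq> {1..n k}"
    and W1: "1 \<in> W i"
  shows "measure M {\<omega>\<in>space M. \<forall>(k,j)\<in>Sigma {1..L} W. (if k = i \<and> j = 1 then t + d else t) < T k j \<omega>}
     = Chat (\<lambda>(k,j). if k = i \<and> j = card (W i) then Fbar i (t + d)
                     else if j \<le> card (W k) then Fbar k t else 1)"
proof -
  define K where "K = {1..L}"
  define c where "c k = card (W k)" for k
  have cle: "c k \<le> n k" if "k \<in> K" for k
    using card_mono[OF _ W[of k]] that K_def c_def by auto
  have ci: "1 \<le> c i" using W1 W[of i] i c_def finite_subset[OF W[of i]]
    by (metis One_nat_def Suc_leI card_gt_0_iff empty_iff finite_atLeastAtMost)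
  have "\<forall>k\<in>K. \<exists>q. q permutes {1..n k} \<and> q ` {1..c k} = W k \<and> (k = i \<longrightarrow> q (c k) = 1)"
  proof
    fix k assume k: "k \<in> K"
    have sub: "{1..c k} \<subseteq> {1..n k}" using cle[OF k] by auto
    have cc: "card {1..c k} = card (W k)" using c_def by simp
    show "\<exists>q. q permutes {1..n k} \<and> q ` {1..c k} = W k \<and> (k = i \<longrightarrow> q (c k) = 1)"
    proof (cases "k = i")
      case True
      then show ?thesis
        using perm_exists[OF finite_atLeastAtMost sub W[of k] cc, of "c k" 1] k K_def ci W1 by auto
    next
      case False
      then show ?thesis
        using perm_exists0[OF finite_atLeastAtMost sub W[of k] cc] k K_def by auto
    qed
  qed
  then obtain p where p: "\<And>k. k \<in> K \<Longrightarrow> p k permutes {1..n k}"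
      "\<And>k. k \<in> K \<Longrightarrow> p k ` {1..c k} = W k" "p i (c i) = 1"
    using i K_def by metis
  have key: "(k = i \<and> p k j = 1) \<longleftrightarrow> (k = i \<and> j = c i)" if "k \<in> K" "j \<in> {1..c k}" for k j
  proof (cases "k = i")
    case True
    have "inj (p i)" using p(1) i K_def permutes_inj by blast
    then have "p i j = 1 \<longleftrightarrow> j = c i" using p(3) by (metis injD)
    then show ?thesis using True by simp
  qed simp
  define U0 where "U0 = Sigma K (\<lambda>k. {1..c k})"
  have U0: "U0 \<subseteq> comp_index L n" unfolding U0_def comp_index_def K_def using cle K_def by (auto simp: Ball_def) (meson atLeastAtMost_iff le_trans)
  define x' where "x' k j = (if k = i \<and> j = c i then t + d else t)" for k j
  have ev: "{\<omega>\<in>space M. \<forall>(k,j)\<in>Sigma K W. (if k = i \<and> j = 1 then t + d else t) < T k j \<omega>}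
      = {\<omega>\<in>space M. \<forall>(k,j)\<in>U0. x' k j < T k (p k j) \<omega>}"
  proof (intro Collect_cong conj_cong refl iffI)
    fix \<omega> assume A: "\<forall>(k,j)\<in>Sigma K W. (if k = i \<and> j = 1 then t + d else t) < T k j \<omega>"
    show "\<forall>(k,j)\<in>U0. x' k j < T k (p k j) \<omega>"
    proof (clarify)
      fix k j assume kj: "(k,j) \<in> U0"
      then have k: "k \<in> K" and j: "j \<in> {1..c k}" unfolding U0_def by auto
      then have "p k j \<in> W k" using p(2)[OF k] by auto
      then have "(if k = i \<and> p k j = 1 then t + d else t) < T k (p k j) \<omega>" using A k by auto
      then show "x' k j < T k (p k j) \<omega>" unfolding x'_def using key[OF k j] by metis
    qed
  next
    fix \<omega> assume A: "\<forall>(k,j)\<in>U0. x' k j < T k (p k j) \<omega>"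
    show "\<forall>(k,j)\<in>Sigma K W. (if k = i \<and> j = 1 then t + d else t) < T k j \<omega>"
    proof (clarify)
      fix k j' assume k: "k \<in> K" and "j' \<in> W k"
      then obtain j where j: "j \<in> {1..c k}" and jj: "j' = p k j" using p(2)[OF k] by (metis imageE)
      then have "x' k j < T k (p k j) \<omega>" using A k unfolding U0_def by auto
      then show "(if k = i \<and> j' = 1 then t + d else t) < T k j' \<omega>"
        unfolding x'_def jj using key[OF k j] by metis
    qed
  qed
  have "measure M {\<omega>\<in>space M. \<forall>(k,j)\<in>U0. x' k j < T k (p k j) \<omega>}
      = measure M {\<omega>\<in>space M. \<forall>(k,j)\<in>U0. x' k j < T k j \<omega>}"
    by (rule exch_event[OF exch rv _ U0]) (use p(1) K_def in auto)
  also have "\<dots> = Chat (\<lambda>(k,j). if (k,j) \<in> U0 then Fbar k (x' k j) else 1)"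
    by (rule marg[OF assms(1) rv rel cop surv U0])
  also have "\<dots> = Chat (\<lambda>(k,j). if k = i \<and> j = card (W i) then Fbar i (t + d)
                     else if j \<le> card (W k) then Fbar k t else 1)"
  proof (rule copula_cong[OF cop])
    fix r assume r: "r \<in> comp_index L n"
    obtain k j where rkj: "r = (k,j)" by fastforce
    have k: "k \<in> K" and j: "1 \<le> j" "j \<le> n k" using r rkj unfolding comp_index_def K_def by auto
    have Fb: "Fbar k s \<in> {0..1}" for s using rel[of k j s] r rkj prob_space.prob_le_1[OF assms(1)] measure_nonneg by simp
    have "(k,j) \<in> U0 \<longleftrightarrow> j \<le> c k" using k j unfolding U0_def by auto
    then show "(\<lambda>(k,j). if (k,j) \<in> U0 then Fbar k (x' k j) else 1) r =
      (\<lambda>(k,j). if k = i \<and> j = card (W i) then Fbar i (t + d)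
                     else if j \<le> card (W k) then Fbar k t else 1) r"
      using rkj ci unfolding x'_def c_def by auto
    show "(\<lambda>(k,j). if (k,j) \<in> U0 then Fbar k (x' k j) else 1) r \<in> {0..1}"
      using rkj Fb by auto
  qed
  finally show ?thesis using ev K_def by simp
qed

lemma sum_pow_sigma:
  fixes K :: "'k set" and R :: "'k \<Rightarrow> 'j set" and g :: "('k \<Rightarrow> nat) \<Rightarrow> real"
  assumes finK: "finite K" and finR: "\<And>k. k \<in> K \<Longrightarrow> finite (R k)"
  shows "(\<Sum>Q\<in>Pow (Sigma K R). g (\<lambda>k\<in>K. card {j. (k,j) \<in> Q}))
       = (\<Sum>jv\<in>PiE K (\<lambda>k. {0..card (R k)}). real (\<Prod>k\<in>K. card (R k) choose jv k) * g jv)"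
proof -
  have bij: "bij_betw (\<lambda>F. Sigma K F) (PiE K (\<lambda>k. Pow (R k))) (Pow (Sigma K R))"
  proof (rule bij_betw_byWitness[where f' = "\<lambda>Q. \<lambda>k\<in>K. {j. (k,j) \<in> Q}"])
    show "\<forall>F\<in>PiE K (\<lambda>k. Pow (R k)). (\<lambda>k\<in>K. {j. (k,j) \<in> Sigma K F}) = F"
      by (auto simp: PiE_iff fun_eq_iff extensional_def)
    show "\<forall>Q\<in>Pow (Sigma K R). Sigma K (\<lambda>k\<in>K. {j. (k,j) \<in> Q}) = Q" by auto
    show "(\<lambda>F. Sigma K F) ` PiE K (\<lambda>k. Pow (R k)) \<subseteq> Pow (Sigma K R)" by (auto simp: PiE_iff)
    show "(\<lambda>Q. \<lambda>k\<in>K. {j. (k,j) \<in> Q}) ` Pow (Sigma K R) \<subseteq> PiE K (\<lambda>k. Pow (R k))" by auto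
  qed
  have "(\<Sum>Q\<in>Pow (Sigma K R). g (\<lambda>k\<in>K. card {j. (k,j) \<in> Q}))
      = (\<Sum>F\<in>PiE K (\<lambda>k. Pow (R k)). g (\<lambda>k\<in>K. card {j. (k,j) \<in> Sigma K F}))"
    using sum.reindex_bij_betw[OF bij, of "\<lambda>Q. g (\<lambda>k\<in>K. card {j. (k,j) \<in> Q})"] by simp
  also have "\<dots> = (\<Sum>F\<in>PiE K (\<lambda>k. Pow (R k)). g (\<lambda>k\<in>K. card (F k)))"
  proof (rule sum.cong[OF refl])
    fix F assume "F \<in> PiE K (\<lambda>k. Pow (R k))"
    have "(\<lambda>k\<in>K. card {j. (k,j) \<in> Sigma K F}) = (\<lambda>k\<in>K. card (F k))"
      by (rule restrict_ext) simp
    then show "g (\<lambda>k\<in>K. card {j. (k,j) \<in> Sigma K F}) = g (\<lambda>k\<in>K. card (F k))" by simp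
  qed
  also have "\<dots> = (\<Sum>jv\<in>PiE K (\<lambda>k. {0..card (R k)}).
        (\<Sum>F\<in>{F \<in> PiE K (\<lambda>k. Pow (R k)). (\<lambda>k\<in>K. card (F k)) = jv}. g (\<lambda>k\<in>K. card (F k))))"
  proof (rule sum.group[symmetric])
    show "finite (PiE K (\<lambda>k. Pow (R k)))" using finK finR by (intro finite_PiE) auto
    show "finite (PiE K (\<lambda>k. {0..card (R k)}))" using finK by (intro finite_PiE) auto
    show "(\<lambda>F. \<lambda>k\<in>K. card (F k)) ` PiE K (\<lambda>k. Pow (R k)) \<subseteq> PiE K (\<lambda>k. {0..card (R k)})"
    proof (rule image_subsetI)
      fix F assume "F \<in> PiE K (\<lambda>k. Pow (R k))"
      then have "card (F k) \<le> card (R k)" if "k \<in> K" for k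
        using finR[OF that] that by (intro card_mono) (auto simp: PiE_iff)
      then show "(\<lambda>k\<in>K. card (F k)) \<in> PiE K (\<lambda>k. {0..card (R k)})" by auto
    qed
  qed
  also have "\<dots> = (\<Sum>jv\<in>PiE K (\<lambda>k. {0..card (R k)}). real (\<Prod>k\<in>K. card (R k) choose jv k) * g jv)"
  proof (rule sum.cong[OF refl])
    fix jv assume jv: "jv \<in> PiE K (\<lambda>k. {0..card (R k)})"
    have fib: "{F \<in> PiE K (\<lambda>k. Pow (R k)). (\<lambda>k\<in>K. card (F k)) = jv}
        = PiE K (\<lambda>k. {B. B \<subseteq> R k \<and> card B = jv k})"
    proof (intro set_eqI iffI)
      fix F assume F: "F \<in> {F \<in> PiE K (\<lambda>k. Pow (R k)). (\<lambda>k\<in>K. card (F k)) = jv}"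
      then have "card (F k) = jv k" if "k \<in> K" for k using that by (metis (mono_tags, lifting) mem_Collect_eq restrict_apply')
      then show "F \<in> PiE K (\<lambda>k. {B. B \<subseteq> R k \<and> card B = jv k})" using F by (auto simp: PiE_iff)
    next
      fix F assume F: "F \<in> PiE K (\<lambda>k. {B. B \<subseteq> R k \<and> card B = jv k})"
      have "(\<lambda>k\<in>K. card (F k)) = jv"
        using F jv by (auto simp: PiE_iff fun_eq_iff extensional_def)
      then show "F \<in> {F \<in> PiE K (\<lambda>k. Pow (R k)). (\<lambda>k\<in>K. card (F k)) = jv}" using F by (auto simp: PiE_iff)
    qed
    have "(\<Sum>F\<in>{F \<in> PiE K (\<lambda>k. Pow (R k)). (\<lambda>k\<in>K. card (F k)) = jv}. g (\<lambda>k\<in>K. card (F k)))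
        = (\<Sum>F\<in>{F \<in> PiE K (\<lambda>k. Pow (R k)). (\<lambda>k\<in>K. card (F k)) = jv}. g jv)"
      by (rule sum.cong) auto
    also have "\<dots> = real (card (PiE K (\<lambda>k. {B. B \<subseteq> R k \<and> card B = jv k}))) * g jv"
      unfolding fib by simp
    also have "card (PiE K (\<lambda>k. {B. B \<subseteq> R k \<and> card B = jv k})) = (\<Prod>k\<in>K. card (R k) choose jv k)"
      using finK finR by (simp add: card_PiE n_subsets)
    finally show "(\<Sum>F\<in>{F \<in> PiE K (\<lambda>k. Pow (R k)). (\<lambda>k\<in>K. card (F k)) = jv}. g (\<lambda>k\<in>K. card (F k)))
        = real (\<Prod>k\<in>K. card (R k) choose jv k) * g jv" .
  qed
  finally show ?thesis .
qed

theorem theorem1: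
  fixes M :: "'a measure"
    and L :: nat and n :: "nat \<Rightarrow> nat"
    and T :: "nat \<Rightarrow> nat \<Rightarrow> 'a \<Rightarrow> real"
    and Fbar :: "nat \<Rightarrow> real \<Rightarrow> real"
    and Chat :: "(nat \<times> nat \<Rightarrow> real) \<Rightarrow> real"
    and i :: nat and m :: "nat \<Rightarrow> nat" and t \<delta> :: real
  assumes "prob_space M"
    and "L \<ge> 1"
    and rv: "\<And>k j. (k, j) \<in> comp_index L n \<Longrightarrow> T k j \<in> borel_measurable M"
    and rel: "\<And>k j s. (k, j) \<in> comp_index L n \<Longrightarrow>
                Fbar k s = measure M {\<omega>\<in>space M. T k j \<omega> > s}"
    and exch: "exchangeable_within_types M L n T"
    and cop: "copula (comp_index L n) Chat"
    and surv: "\<And>s :: nat \<Rightarrow> nat \<Rightarrow> real.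
                measure M {\<omega>\<in>space M. \<forall>(k, j)\<in>comp_index L n. T k j \<omega> > s k j}
                  = Chat (\<lambda>(k, j). Fbar k (s k j))"
    and "i \<in> {1..L}"
    and "\<And>k. k \<in> {1..L} \<Longrightarrow> k \<noteq> i \<Longrightarrow> m k \<le> n k"
    and "m i + 1 \<le> n i"
    and "t \<ge> 0" and "\<delta> > 0"
  shows "measure M {\<omega>\<in>space M.
            (\<forall>k\<in>{1..L} - {i}. \<forall>j\<in>{1..n k}.
                 (j \<le> m k \<longrightarrow> T k j \<omega> > t) \<and> (m k < j \<longrightarrow> T k j \<omega> \<le> t)) \<and>
            t < T i 1 \<omega> \<and> T i 1 \<omega> \<le> t + \<delta> \<and>
            (\<forall>j\<in>{2..n i}. (j \<le> m i + 1 \<longrightarrow> T i j \<omega> > t) \<and> (m i + 1 < j \<longrightarrow> T i j \<omega> \<le> t))}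
   = (\<Sum>jv\<in>PiE {1..L} (\<lambda>k. {0..(if k = i then n k - m k - 1 else n k - m k)}).
        (-1) ^ (\<Sum>k\<in>{1..L}. jv k) *
        (\<Prod>k\<in>{1..L}. real ((if k = i then n k - m k - 1 else n k - m k) choose jv k)) *
        (Chat (\<lambda>(k, j). if j \<le> m k + jv k + (if k = i then 1 else 0) then Fbar k t else 1)
         - Chat (\<lambda>(k, j). if k = i \<and> j = m i + jv i + 1 then Fbar i (t + \<delta>)
                          else if j \<le> m k + jv k then Fbar k t else 1)))"
proof -
  interpret prob_space M by fact
  define K where "K = {1..L}"
  define I where "I = comp_index L n"
  define c where "c k = (if k = i then m i + 1 else m k)" for k
  define Rk where "Rk k = {c k + 1..n k}" for k
  define R where "R = Sigma K Rk"
  define f where "f r = {\<omega>\<in>space M. t < T (fst r) (snd r) \<omega>}" for r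
  define Up where "Up = {\<omega>\<in>space M. \<forall>(k,j)\<in>Sigma K (\<lambda>k. {1..c k}). t < T k j \<omega>}"
  define Hi where "Hi = {\<omega>\<in>space M. t + \<delta> < T i 1 \<omega>}"
  define Low where "Low = (\<Inter>r\<in>R. space M - f r)"
  define G where "G jv = (-1::real) ^ (\<Sum>k\<in>K. jv k) *
        (Chat (\<lambda>(k, j). if j \<le> m k + jv k + (if k = i then 1 else 0) then Fbar k t else 1)
         - Chat (\<lambda>(k, j). if k = i \<and> j = m i + jv i + 1 then Fbar i (t + \<delta>)
                          else if j \<le> m k + jv k then Fbar k t else 1))" for jv :: "nat \<Rightarrow> nat"
  have iK: "i \<in> K" using assms K_def by simp
  have cle: "c k \<le> n k" if "k \<in> K" for k using assms that unfolding c_def K_def by auto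
  have ci: "c i = m i + 1" unfolding c_def by simp
  have i1I: "(i, 1) \<in> I" using assms unfolding I_def comp_index_def by auto
  have finK: "finite K" unfolding K_def by simp
  have RI: "R \<subseteq> I" unfolding R_def I_def comp_index_def K_def Rk_def by auto
  have finR: "finite R" using RI finite_comp_index I_def finite_subset by metis
  have rvI: "(\<lambda>\<omega>. T (fst r) (snd r) \<omega>) \<in> borel_measurable M" if "r \<in> I" for r
    using rv[of "fst r" "snd r"] that I_def by auto
  have Fb01: "Fbar k s \<in> {0..1}" if "(k,j) \<in> I" for k j s
    using rel[of k j s] that I_def by simp
  have fev: "f r \<in> events" if "r \<in> R" for r
    using rvI[of r] that RI unfolding f_def by auto
  have evI: "{\<omega>\<in>space M. \<forall>(k, j)\<in>W. y k j < T k j \<omega>} \<in> events" if "W \<subseteq> I" for W y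
  proof -
    have fW: "finite W" using that finite_comp_index I_def finite_subset by metis
    have "{\<omega>\<in>space M. \<forall>(k, j)\<in>W. y k j < T k j \<omega>} =
      space M - (\<Union>r\<in>W. space M - {\<omega>\<in>space M. y (fst r) (snd r) < T (fst r) (snd r) \<omega>})"
      by fastforce
    also have "\<dots> \<in> events"
    proof (intro sets.Diff sets.finite_UN fW sets.top)
      fix r assume "r \<in> W"
      then have "r \<in> I" using that by auto
      from rvI[OF this] show "{\<omega>\<in>space M. y (fst r) (snd r) < T (fst r) (snd r) \<omega>} \<in> events"
        by measurable
    qed
    finally show ?thesis .
  qed
  have Upev: "Up \<in> events" unfolding Up_def
    by (rule evI) (use cle in \<open>auto simp: I_def comp_index_def K_def Ball_def\<close>, meson atLeastAtMost_iff le_trans)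
  have Hiev: "Hi \<in> events"
  proof -
    have "(i,1) \<in> I" using assms unfolding I_def comp_index_def by auto
    from rv[of i 1] this have "T i 1 \<in> borel_measurable M" unfolding I_def by simp
    then show ?thesis unfolding Hi_def by measurable
  qed
  have ULev: "Up \<inter> Low \<in> events"
  proof -
    have "Up \<inter> Low = Up - (\<Union>r\<in>R. f r)" unfolding Low_def f_def Up_def by auto
    then show ?thesis using fev finR Upev by auto
  qed
  have UHLev: "Up \<inter> Hi \<inter> Low \<in> events"
  proof -
    have "Up \<inter> Hi \<inter> Low = Up \<inter> Hi - (\<Union>r\<in>R. f r)" unfolding Low_def f_def Up_def by auto
    then show ?thesis using fev finR Upev Hiev by auto
  qed
  have evA: "{\<omega>\<in>space M.
            (\<forall>k\<in>{1..L} - {i}. \<forall>j\<in>{1..n k}.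
                 (j \<le> m k \<longrightarrow> T k j \<omega> > t) \<and> (m k < j \<longrightarrow> T k j \<omega> \<le> t)) \<and>
            t < T i 1 \<omega> \<and> T i 1 \<omega> \<le> t + \<delta> \<and>
            (\<forall>j\<in>{2..n i}. (j \<le> m i + 1 \<longrightarrow> T i j \<omega> > t) \<and> (m i + 1 < j \<longrightarrow> T i j \<omega> \<le> t))}
        = Up \<inter> Low - Up \<inter> Hi \<inter> Low"
  proof (intro set_eqI)
    fix \<omega>
    have memUp: "\<omega> \<in> Up \<longleftrightarrow> \<omega> \<in> space M \<and> (\<forall>k\<in>K. \<forall>j. 1 \<le> j \<and> j \<le> c k \<longrightarrow> t < T k j \<omega>)"
      unfolding Up_def by auto
    have memLow: "\<omega> \<in> Low \<longleftrightarrow> (\<forall>k\<in>K. \<forall>j. c k < j \<and> j \<le> n k \<longrightarrow> T k j \<omega> \<le> t)"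
      if "\<omega> \<in> space M"
    proof -
      have "\<omega> \<in> Low \<longleftrightarrow> (\<forall>r\<in>R. \<not> t < T (fst r) (snd r) \<omega>)"
        unfolding Low_def f_def using that by blast
      also have "\<dots> \<longleftrightarrow> (\<forall>k\<in>K. \<forall>j. c k < j \<and> j \<le> n k \<longrightarrow> T k j \<omega> \<le> t)"
      proof
        assume H: "\<forall>r\<in>R. \<not> t < T (fst r) (snd r) \<omega>"
        show "\<forall>k\<in>K. \<forall>j. c k < j \<and> j \<le> n k \<longrightarrow> T k j \<omega> \<le> t"
        proof (intro ballI allI impI)
          fix k j assume "k \<in> K" "c k < j \<and> j \<le> n k"
          then have "(k,j) \<in> R" unfolding R_def Rk_def by auto
          then show "T k j \<omega> \<le> t" using H by fastforce
        qed
      next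
        assume H: "\<forall>k\<in>K. \<forall>j. c k < j \<and> j \<le> n k \<longrightarrow> T k j \<omega> \<le> t"
        show "\<forall>r\<in>R. \<not> t < T (fst r) (snd r) \<omega>"
        proof
          fix r assume "r \<in> R"
          then have "fst r \<in> K" "c (fst r) < snd r \<and> snd r \<le> n (fst r)" unfolding R_def Rk_def by auto
          then show "\<not> t < T (fst r) (snd r) \<omega>" using H not_less by blast
        qed
      qed
      finally show ?thesis .
    qed
    have memHi: "\<omega> \<in> Hi \<longleftrightarrow> \<omega> \<in> space M \<and> t + \<delta> < T i 1 \<omega>" unfolding Hi_def by auto
    have mk: "m k \<le> n k" if "k \<in> K" "k \<noteq> i" for k using assms that K_def by auto
    have mi: "m i + 1 \<le> n i" using assms by auto
    show "\<omega> \<in> {\<omega>\<in>space M.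
            (\<forall>k\<in>{1..L} - {i}. \<forall>j\<in>{1..n k}.
                 (j \<le> m k \<longrightarrow> T k j \<omega> > t) \<and> (m k < j \<longrightarrow> T k j \<omega> \<le> t)) \<and>
            t < T i 1 \<omega> \<and> T i 1 \<omega> \<le> t + \<delta> \<and>
            (\<forall>j\<in>{2..n i}. (j \<le> m i + 1 \<longrightarrow> T i j \<omega> > t) \<and> (m i + 1 < j \<longrightarrow> T i j \<omega> \<le> t))}
        \<longleftrightarrow> \<omega> \<in> Up \<inter> Low - Up \<inter> Hi \<inter> Low"
    proof (cases "\<omega> \<in> space M")
      case False
      then show ?thesis using memUp by auto
    next
      case True
      have L1: "(\<forall>k\<in>{1..L} - {i}. \<forall>j\<in>{1..n k}.
                 (j \<le> m k \<longrightarrow> T k j \<omega> > t) \<and> (m k < j \<longrightarrow> T k j \<omega> \<le> t)) \<and>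
            t < T i 1 \<omega> \<and>
            (\<forall>j\<in>{2..n i}. (j \<le> m i + 1 \<longrightarrow> T i j \<omega> > t) \<and> (m i + 1 < j \<longrightarrow> T i j \<omega> \<le> t))
          \<longleftrightarrow> (\<forall>k\<in>K. \<forall>j. 1 \<le> j \<and> j \<le> c k \<longrightarrow> t < T k j \<omega>) \<and>
              (\<forall>k\<in>K. \<forall>j. c k < j \<and> j \<le> n k \<longrightarrow> T k j \<omega> \<le> t)" (is "?A \<longleftrightarrow> ?B")
      proof
        assume A: ?A
        have A1: "\<forall>k\<in>{1..L} - {i}. \<forall>j\<in>{1..n k}.
                 (j \<le> m k \<longrightarrow> T k j \<omega> > t) \<and> (m k < j \<longrightarrow> T k j \<omega> \<le> t)"
          and A2: "t < T i 1 \<omega>"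
          and A3: "\<forall>j\<in>{2..n i}. (j \<le> m i + 1 \<longrightarrow> T i j \<omega> > t) \<and> (m i + 1 < j \<longrightarrow> T i j \<omega> \<le> t)"
          using A by blast+
        show ?B
        proof (intro conjI ballI allI impI)
          fix k j assume k: "k \<in> K" and j: "1 \<le> j \<and> j \<le> c k"
          show "t < T k j \<omega>"
          proof (cases "k = i")
            case True
            show ?thesis
            proof (cases "j = 1")
              case True
              then show ?thesis using A2 \<open>k = i\<close> by simp
            next
              case False
              then have "j \<in> {2..n i}" "j \<le> m i + 1" using j mi \<open>k = i\<close> unfolding c_def by auto
              then show ?thesis using A3 \<open>k = i\<close> by blast
            qed
          next
            case False
            then have "k \<in> {1..L} - {i}" "j \<in> {1..n k}" "j \<le> m k"
              using j mk[OF k False] k unfolding c_def K_def by auto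
            then show ?thesis using A1 by blast
          qed
        next
          fix k j assume k: "k \<in> K" and j: "c k < j \<and> j \<le> n k"
          show "T k j \<omega> \<le> t"
          proof (cases "k = i")
            case True
            then have "j \<in> {2..n i}" "m i + 1 < j" using j unfolding c_def by auto
            then show ?thesis using A3 True by blast
          next
            case False
            then have "k \<in> {1..L} - {i}" "j \<in> {1..n k}" "m k < j"
              using j k unfolding c_def K_def by auto
            then show ?thesis using A1 by blast
          qed
        qed
      next
        assume B: ?B
        have B1: "t < T k j \<omega>" if "k \<in> K" "1 \<le> j" "j \<le> c k" for k j using B that by blast
        have B2: "T k j \<omega> \<le> t" if "k \<in> K" "c k < j" "j \<le> n k" for k j using B that by blast
        have a1: "\<forall>k\<in>{1..L} - {i}. \<forall>j\<in>{1..n k}.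
                 (j \<le> m k \<longrightarrow> T k j \<omega> > t) \<and> (m k < j \<longrightarrow> T k j \<omega> \<le> t)"
        proof (intro ballI)
          fix k j assume k: "k \<in> {1..L} - {i}" and j: "j \<in> {1..n k}"
          then have kK: "k \<in> K" "c k = m k" unfolding K_def c_def by auto
          show "(j \<le> m k \<longrightarrow> T k j \<omega> > t) \<and> (m k < j \<longrightarrow> T k j \<omega> \<le> t)"
            using B1[OF kK(1), of j] B2[OF kK(1), of j] kK(2) j by auto
        qed
        have a2: "t < T i 1 \<omega>" using B1[OF iK, of 1] ci by simp
        have a3: "\<forall>j\<in>{2..n i}. (j \<le> m i + 1 \<longrightarrow> T i j \<omega> > t) \<and> (m i + 1 < j \<longrightarrow> T i j \<omega> \<le> t)"
        proof
          fix j assume j: "j \<in> {2..n i}"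
          show "(j \<le> m i + 1 \<longrightarrow> T i j \<omega> > t) \<and> (m i + 1 < j \<longrightarrow> T i j \<omega> \<le> t)"
            using B1[OF iK, of j] B2[OF iK, of j] ci j by auto
        qed
        show ?A using a1 a2 a3 by blast
      qed
      have "\<omega> \<in> Up \<inter> Low - Up \<inter> Hi \<inter> Low \<longleftrightarrow> \<omega> \<in> Up \<and> \<omega> \<in> Low \<and> \<omega> \<notin> Hi" by blast
      also have "\<dots> \<longleftrightarrow> ?B \<and> T i 1 \<omega> \<le> t + \<delta>"
        unfolding memUp memLow[OF True] memHi using True by (simp add: not_less)
      finally show ?thesis using L1 True by blast
    qed
  qed
  have "Up \<inter> Hi \<inter> Low \<subseteq> Up \<inter> Low" by auto
  then have "prob (Up \<inter> Low - Up \<inter> Hi \<inter> Low) = prob (Up \<inter> Low) - prob (Up \<inter> Hi \<inter> Low)"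
    using ULev UHLev by (intro finite_measure_Diff) auto
  also have "\<dots> = (\<Sum>Q\<in>Pow R. (-1) ^ card Q * prob (Up \<inter> (\<Inter>r\<in>Q. f r)))
       - (\<Sum>Q\<in>Pow R. (-1) ^ card Q * prob (Up \<inter> Hi \<inter> (\<Inter>r\<in>Q. f r)))"
    unfolding Low_def using incl_excl[OF finR fev] Upev Hiev by auto
  also have "\<dots> = (\<Sum>Q\<in>Pow R. (-1) ^ card Q * (prob (Up \<inter> (\<Inter>r\<in>Q. f r)) - prob (Up \<inter> Hi \<inter> (\<Inter>r\<in>Q. f r))))"
    by (simp add: sum_subtractf right_diff_distrib)
  also have "\<dots> = (\<Sum>Q\<in>Pow (Sigma K Rk). G (\<lambda>k\<in>K. card {j. (k,j) \<in> Q}))"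
    unfolding R_def
  proof (rule sum.cong[OF refl])
    fix Q assume Q: "Q \<in> Pow (Sigma K Rk)"
    define F where "F k = {j. (k,j) \<in> Q}" for k
    define W where "W k = {1..c k} \<union> F k" for k
    define jv where "jv = (\<lambda>k\<in>K. card (F k))"
    have FR: "F k \<subseteq> Rk k" if "k \<in> K" for k using Q that unfolding F_def by auto
    have finF: "finite (F k)" if "k \<in> K" for k using FR[OF that] finite_subset unfolding Rk_def by blast
    have QF: "Q = Sigma K F" using Q unfolding F_def by auto
    have Wsub: "W k \<subseteq> {1..n k}" if "k \<in> K" for k
      using FR[OF that] cle[OF that] unfolding W_def Rk_def by auto
    have W1: "1 \<in> W i" unfolding W_def ci by auto
    have cardW: "card (W k) = c k + card (F k)" if "k \<in> K" for k
    proof -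
      have "{1..c k} \<inter> F k = {}" using FR[OF that] unfolding Rk_def by auto
      then show ?thesis unfolding W_def using finF[OF that] by (simp add: card_Un_disjoint)
    qed
    have cardQ: "card Q = (\<Sum>k\<in>K. jv k)" unfolding QF jv_def using finK finF by simp
    have Ui1: "(i, 1) \<notin> Q" using Q ci unfolding Rk_def by auto
    have e1: "Up \<inter> (\<Inter>r\<in>Q. f r) = {\<omega>\<in>space M. \<forall>(k,j)\<in>Sigma K W. (if k = i \<and> j = 1 then t + 0 else t) < T k j \<omega>}"
    proof (intro set_eqI iffI)
      fix \<omega> assume "\<omega> \<in> Up \<inter> (\<Inter>r\<in>Q. f r)"
      then show "\<omega> \<in> {\<omega>\<in>space M. \<forall>(k,j)\<in>Sigma K W. (if k = i \<and> j = 1 then t + 0 else t) < T k j \<omega>}"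
        unfolding Up_def f_def W_def QF by auto
    next
      fix \<omega> assume A: "\<omega> \<in> {\<omega>\<in>space M. \<forall>(k,j)\<in>Sigma K W. (if k = i \<and> j = 1 then t + 0 else t) < T k j \<omega>}"
      have "t < T k j \<omega>" if "k \<in> K" "j \<in> W k" for k j
      proof -
        have "(if k = i \<and> j = 1 then t + 0 else t) < T k j \<omega>" using A that by blast
        then show ?thesis by (simp split: if_splits)
      qed
      then show "\<omega> \<in> Up \<inter> (\<Inter>r\<in>Q. f r)"
        using A unfolding Up_def f_def W_def QF by auto
    qed
    have e2: "Up \<inter> Hi \<inter> (\<Inter>r\<in>Q. f r) = {\<omega>\<in>space M. \<forall>(k,j)\<in>Sigma K W. (if k = i \<and> j = 1 then t + \<delta> else t) < T k j \<omega>}"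
    proof (intro set_eqI iffI)
      fix \<omega> assume "\<omega> \<in> Up \<inter> Hi \<inter> (\<Inter>r\<in>Q. f r)"
      then show "\<omega> \<in> {\<omega>\<in>space M. \<forall>(k,j)\<in>Sigma K W. (if k = i \<and> j = 1 then t + \<delta> else t) < T k j \<omega>}"
        using Ui1 unfolding Up_def Hi_def f_def W_def QF by auto
    next
      fix \<omega> assume A: "\<omega> \<in> {\<omega>\<in>space M. \<forall>(k,j)\<in>Sigma K W. (if k = i \<and> j = 1 then t + \<delta> else t) < T k j \<omega>}"
      have "t < T k j \<omega>" if "k \<in> K" "j \<in> W k" for k j
      proof -
        have "(if k = i \<and> j = 1 then t + \<delta> else t) < T k j \<omega>" using A that by blast
        then show ?thesis using \<open>\<delta> > 0\<close> by (simp split: if_splits)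
      qed
      moreover have "t + \<delta> < T i 1 \<omega>" using A iK W1 by fastforce
      ultimately show "\<omega> \<in> Up \<inter> Hi \<inter> (\<Inter>r\<in>Q. f r)"
        using A unfolding Up_def Hi_def f_def W_def QF by auto
    qed
    have cW: "card (W k) = m k + jv k + (if k = i then 1 else 0)" if "k \<in> K" for k
      using cardW[OF that] that unfolding jv_def c_def by simp
    have cWi: "card (W i) = m i + jv i + 1" using cW[OF iK] by simp
    have kK: "k \<in> {1..L}" if "(k,j) \<in> comp_index L n" for k j
      using that unfolding comp_index_def by auto
    have C1: "prob (Up \<inter> (\<Inter>r\<in>Q. f r)) = Chat (\<lambda>(k,j). if j \<le> m k + jv k + (if k = i then 1 else 0) then Fbar k t else 1)"
    proof -
      have "prob (Up \<inter> (\<Inter>r\<in>Q. f r)) = Chat (\<lambda>(k,j). if k = i \<and> j = card (W i) then Fbar i (t + 0)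
                     else if j \<le> card (W k) then Fbar k t else 1)"
        unfolding e1 K_def by (rule canon[where t=t and d="0", OF assms(1) rv rel exch cop surv assms(8)]) (use Wsub W1 K_def in auto)
      also have "\<dots> = Chat (\<lambda>(k,j). if j \<le> m k + jv k + (if k = i then 1 else 0) then Fbar k t else 1)"
      proof (rule copula_cong[OF cop])
        fix r assume r: "r \<in> comp_index L n"
        obtain k j where rkj: "r = (k,j)" by fastforce
        have k: "k \<in> K" using kK r rkj K_def by auto
        have Fb: "Fbar k s \<in> {0..1}" for s using Fb01[of k j s] r rkj I_def by simp
        show "(\<lambda>(k,j). if k = i \<and> j = card (W i) then Fbar i (t + 0)
                     else if j \<le> card (W k) then Fbar k t else 1) r =
              (\<lambda>(k,j). if j \<le> m k + jv k + (if k = i then 1 else 0) then Fbar k t else 1) r"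
          using rkj cW[OF k] cWi by auto
        show "(\<lambda>(k,j). if k = i \<and> j = card (W i) then Fbar i (t + 0)
                     else if j \<le> card (W k) then Fbar k t else 1) r \<in> {0..1}"
          using rkj Fb by auto
      qed
      finally show ?thesis .
    qed
    have C2: "prob (Up \<inter> Hi \<inter> (\<Inter>r\<in>Q. f r)) = Chat (\<lambda>(k, j). if k = i \<and> j = m i + jv i + 1 then Fbar i (t + \<delta>)
                          else if j \<le> m k + jv k then Fbar k t else 1)"
    proof -
      have "prob (Up \<inter> Hi \<inter> (\<Inter>r\<in>Q. f r)) = Chat (\<lambda>(k,j). if k = i \<and> j = card (W i) then Fbar i (t + \<delta>)
                     else if j \<le> card (W k) then Fbar k t else 1)"
        unfolding e2 K_def by (rule canon[where t=t and d="\<delta>", OF assms(1) rv rel exch cop surv assms(8)]) (use Wsub W1 K_def in auto)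
      also have "\<dots> = Chat (\<lambda>(k, j). if k = i \<and> j = m i + jv i + 1 then Fbar i (t + \<delta>)
                          else if j \<le> m k + jv k then Fbar k t else 1)"
      proof (rule copula_cong[OF cop])
        fix r assume r: "r \<in> comp_index L n"
        obtain k j where rkj: "r = (k,j)" by fastforce
        have k: "k \<in> K" using kK r rkj K_def by auto
        have Fb: "Fbar k s \<in> {0..1}" for s using Fb01[of k j s] r rkj I_def by simp
        show "(\<lambda>(k,j). if k = i \<and> j = card (W i) then Fbar i (t + \<delta>)
                     else if j \<le> card (W k) then Fbar k t else 1) r =
              (\<lambda>(k, j). if k = i \<and> j = m i + jv i + 1 then Fbar i (t + \<delta>)
                          else if j \<le> m k + jv k then Fbar k t else 1) r"
          using rkj cW[OF k] cWi by auto
        show "(\<lambda>(k,j). if k = i \<and> j = card (W i) then Fbar i (t + \<delta>)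
                     else if j \<le> card (W k) then Fbar k t else 1) r \<in> {0..1}"
          using rkj Fb Fb01[OF i1I, of "t + \<delta>"] by auto
      qed
      finally show ?thesis .
    qed
    have jvQ: "(\<lambda>k\<in>K. card {j. (k,j) \<in> Q}) = jv" unfolding jv_def F_def by simp
    show "(-1) ^ card Q * (prob (Up \<inter> (\<Inter>r\<in>Q. f r)) - prob (Up \<inter> Hi \<inter> (\<Inter>r\<in>Q. f r)))
        = G (\<lambda>k\<in>K. card {j. (k,j) \<in> Q})"
      unfolding jvQ G_def C1 C2 cardQ by (rule refl)
  qed
  also have "\<dots> = (\<Sum>jv\<in>PiE K (\<lambda>k. {0..card (Rk k)}). real (\<Prod>k\<in>K. card (Rk k) choose jv k) * G jv)"
    by (rule sum_pow_sigma[OF finK]) (simp add: Rk_def)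
  also have "\<dots> = (\<Sum>jv\<in>PiE {1..L} (\<lambda>k. {0..(if k = i then n k - m k - 1 else n k - m k)}).
        (-1) ^ (\<Sum>k\<in>{1..L}. jv k) *
        (\<Prod>k\<in>{1..L}. real ((if k = i then n k - m k - 1 else n k - m k) choose jv k)) *
        (Chat (\<lambda>(k, j). if j \<le> m k + jv k + (if k = i then 1 else 0) then Fbar k t else 1)
         - Chat (\<lambda>(k, j). if k = i \<and> j = m i + jv i + 1 then Fbar i (t + \<delta>)
                          else if j \<le> m k + jv k then Fbar k t else 1)))"
  proof (rule sum.cong)
    show "PiE K (\<lambda>k. {0..card (Rk k)}) = PiE {1..L} (\<lambda>k. {0..(if k = i then n k - m k - 1 else n k - m k)})"
      unfolding K_def Rk_def c_def by (intro PiE_cong) auto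
  next
    fix jv assume "jv \<in> PiE {1..L} (\<lambda>k. {0..(if k = i then n k - m k - 1 else n k - m k)})"
    have "(\<Prod>k\<in>K. card (Rk k) choose jv k) = (\<Prod>k\<in>{1..L}. (if k = i then n k - m k - 1 else n k - m k) choose jv k)"
      unfolding K_def Rk_def c_def by (intro prod.cong) auto
    then show "real (\<Prod>k\<in>K. card (Rk k) choose jv k) * G jv = 
        (-1) ^ (\<Sum>k\<in>{1..L}. jv k) *
        (\<Prod>k\<in>{1..L}. real ((if k = i then n k - m k - 1 else n k - m k) choose jv k)) *
        (Chat (\<lambda>(k, j). if j \<le> m k + jv k + (if k = i then 1 else 0) then Fbar k t else 1)
         - Chat (\<lambda>(k, j). if k = i \<and> j = m i + jv i + 1 then Fbar i (t + \<delta>)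
                          else if j \<le> m k + jv k then Fbar k t else 1))"
      unfolding G_def K_def by (simp add: of_nat_prod mult_ac)
  qed
  finally show ?thesis using evA by (simp add: Low_def)
qed

end
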